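(* Let $A_0,A_1,\dots,A_n$ be the distance matrices of the hypercube $Q_n$ (real $2^n\times 2^n$ matrices). (i) If $n$ is odd, then $\ker(A_0+A_1)\subseteq\ker(A_{2i}+A_{2i+1})$ for all $i=0,1,\dots,\frac{n-1}{2}$. (ii) If $n\equiv 1\pmod 4$, then $\ker(A_0+A_1)\subseteq\ker(A_i+A_{n-i})$ for all $i=0,1,\dots,\frac{n-1}{2}$.
   Context: $Q_n$ is the hypercube with vertex set $\mathbb{F}_2^n$, two vertices adjacent iff they differ in exactly one coordinate. For $0\le i\le n$, the $i$-distance matrix $A_i$ is the matrix indexed by vertices with $(A_i)_{xy}=1$ if $d(x,y)=i$ and $0$ otherwise; $A_0=I$ and $A_1$ is the adjacency matrix. *)

theory Defs
  imports Complex_Main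
begin

definition hcube_vertices :: "nat \<Rightarrow> bool list set" where
  "hcube_vertices n = {xs. length xs = n}"

text \<open>Hamming distance = graph distance in Q_n.\<close>
definition hdist :: "bool list \<Rightarrow> bool list \<Rightarrow> nat" where
  "hdist xs ys = card {k. k < length xs \<and> xs ! k \<noteq> ys ! k}"

definition dist_matrix :: "nat \<Rightarrow> bool list \<Rightarrow> bool list \<Rightarrow> real" where
  "dist_matrix i x y = (if hdist x y = i then 1 else 0)"

definition hcube_kernel :: "nat \<Rightarrow> (bool list \<Rightarrow> bool list \<Rightarrow> real) \<Rightarrow> (bool list \<Rightarrow> real) set" where
  "hcube_kernel n M = {v. (\<forall>y. y \<notin> hcube_vertices n \<longrightarrow> v y = 0) \<and>
      (\<forall>x\<in>hcube_vertices n. (\<Sum>y\<in>hcube_vertices n. M x y * v y) = 0)}"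

end

theory Submission
  imports Defs
begin

lemma binom_id: "(Suc i) * (m choose (Suc i)) = (m - i) * (m choose i)"
  using times_binomial_minus1_eq[of "Suc i" m] binomial_absorb_comp[of m i] by simp

definition cc :: "nat \<Rightarrow> nat \<Rightarrow> real" where
  "cc m j = (if even j then (-1)^(j div 2) * real (m choose (j div 2))
             else - ((-1)^(j div 2) * real (m choose (j div 2))))"

lemma cc_rec: "real (j+2) * cc m (j+2) = - cc m (j+1) - (real (2*m+1) - real j) * cc m j"
proof (cases "even j")
  case True
  then obtain i where j: "j = 2*i" by blast
  have b: "real (Suc i) * real (m choose Suc i) = real (m - i) * real (m choose i)"
    using binom_id[of i m] by (metis of_nat_mult)
  show ?thesis
  proof (cases "i \<le> m")
    case True
    then have "real (m - i) = real m - real i" by simp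
    then have h: "real m * real (m choose i) = real (m choose Suc i) + real i * real (m choose i) + real i * real (m choose Suc i)"
      using b by (simp add: algebra_simps)
    have "real (j+2) * cc m (j+2) + cc m (j+1) + (real (2*m+1) - real j) * cc m j
       = 2 * (-1)^i * (real m * real (m choose i) - (real (m choose Suc i) + real i * real (m choose i) + real i * real (m choose Suc i)))"
      by (simp add: cc_def j algebra_simps)
    also have "\<dots> = 0" using h by simp
    finally show ?thesis by linarith
  next
    case False
    then show ?thesis by (simp add: cc_def j binomial_eq_0)
  qed
next
  case False
  then obtain i where j: "j = 2*i+1" by (metis oddE)
  have b: "real (Suc i) * real (m choose Suc i) = real (m - i) * real (m choose i)"
    using binom_id[of i m] by (metis of_nat_mult)
  have e1: "(2*i+1+2) div 2 = Suc i" "(2*i+1+1) div 2 = Suc i" "(2*i+1) div 2 = i" by simp_all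
  show ?thesis
  proof (cases "i \<le> m")
    case True
    then have "real (m - i) = real m - real i" by simp
    then have h: "real m * real (m choose i) = real (m choose Suc i) + real i * real (m choose i) + real i * real (m choose Suc i)"
      using b by (simp add: algebra_simps)
    have "real (j+2) * cc m (j+2) + cc m (j+1) + (real (2*m+1) - real j) * cc m j
       = 2 * (-1)^i * ((real (m choose Suc i) + real i * real (m choose i) + real i * real (m choose Suc i)) - real m * real (m choose i))"
      unfolding cc_def j e1 by (simp add: algebra_simps)
    also have "\<dots> = 0" using h by simp
    finally show ?thesis by linarith
  next
    case False
    then show ?thesis unfolding cc_def j e1 by (simp add: binomial_eq_0)
  qed
qed


lemma cc_pair: "cc m (2*i) + cc m (2*i+1) = 0"
  unfolding cc_def by simp

lemma cc_sym: assumes "even m" "i \<le> m" shows "cc m i + cc m (2*m+1-i) = 0"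
proof (cases "even i")
  case True
  then obtain a where i: "i = 2*a" by blast
  have e: "2*m+1-i = 2*(m-a)+1" using assms i by simp
  have "(-1::real)^(m-a) = (-1)^a"
  proof -
    have "a \<le> m" using assms i by simp
    then have "even (m-a) = even a" using assms(1) by auto
    then show ?thesis by (simp add: minus_one_power_iff)
  qed
  then show ?thesis unfolding e unfolding cc_def i using assms i by (simp add: binomial_symmetric[symmetric])
next
  case False
  then obtain a where i: "i = 2*a+1" by (metis oddE)
  have e: "2*m+1-i = 2*(m-a)" using assms i by simp
  have "(-1::real)^(m-a) = (-1)^a"
  proof -
    have "a \<le> m" using assms i by simp
    then have "even (m-a) = even a" using assms(1) by auto
    then show ?thesis by (simp add: minus_one_power_iff)
  qed
  then show ?thesis unfolding e unfolding cc_def i using assms i by (simp add: binomial_symmetric[symmetric])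
qed


definition flip :: "bool list \<Rightarrow> nat \<Rightarrow> bool list" where
  "flip x k = x[k := \<not> x ! k]"

lemma finite_V: "finite (hcube_vertices n)"
proof -
  have "hcube_vertices n = {xs. set xs \<subseteq> (UNIV::bool set) \<and> length xs = n}"
    unfolding hcube_vertices_def by auto
  then show ?thesis using finite_lists_length_eq[of "UNIV::bool set" n] by simp
qed

lemma hdist_0: assumes "length x = length y" shows "hdist x y = 0 \<longleftrightarrow> x = y"
proof
  assume "hdist x y = 0"
  then have "{k. k < length x \<and> x ! k \<noteq> y ! k} = {}"
    unfolding hdist_def by (simp add: card_eq_0_iff)
  then show "x = y" using assms by (auto intro: nth_equalityI)
qed (simp add: hdist_def)

lemma hdist_flip:
  assumes "length x = length z" "k < length x"
  shows "hdist (flip x k) z = (if x ! k \<noteq> z ! k then hdist x z - 1 else hdist x z + 1)"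
proof -
  let ?A = "{i. i < length x \<and> x ! i \<noteq> z ! i}"
  have fA: "finite ?A" by (rule finite_subset[of _ "{..<length x}"]) auto
  have "{i. i < length (flip x k) \<and> flip x k ! i \<noteq> z ! i} =
        (if x ! k \<noteq> z ! k then ?A - {k} else insert k ?A)"
    using assms by (auto simp: flip_def nth_list_update)
  then show ?thesis
    using fA assms unfolding hdist_def by (auto simp: card_insert_disjoint)
qed

lemma neighbours:
  assumes "x \<in> hcube_vertices n"
  shows "{y \<in> hcube_vertices n. hdist x y = 1} = flip x ` {..<n}"
proof
  have len: "length x = n" using assms by (simp add: hcube_vertices_def)
  show "flip x ` {..<n} \<subseteq> {y \<in> hcube_vertices n. hdist x y = 1}"
  proof
    fix y assume "y \<in> flip x ` {..<n}"
    then obtain k where k: "k < n" "y = flip x k" by auto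
    have "{i. i < length x \<and> x ! i \<noteq> y ! i} = {k}"
    proof (intro set_eqI iffI)
      fix i assume "i \<in> {i. i < length x \<and> x ! i \<noteq> y ! i}"
      then show "i \<in> {k}" using k len by (cases "i = k") (simp_all add: flip_def)
    next
      fix i assume "i \<in> {k}"
      then show "i \<in> {i. i < length x \<and> x ! i \<noteq> y ! i}" using k len by (simp add: flip_def)
    qed
    moreover have "length y = n" using k len by (simp add: flip_def)
    ultimately show "y \<in> {y \<in> hcube_vertices n. hdist x y = 1}"
      by (simp add: hdist_def hcube_vertices_def)
  qed
next
  have len: "length x = n" using assms by (simp add: hcube_vertices_def)
  show "{y \<in> hcube_vertices n. hdist x y = 1} \<subseteq> flip x ` {..<n}"
  proof
    fix y assume y: "y \<in> {y \<in> hcube_vertices n. hdist x y = 1}"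
    then have ly: "length y = n" by (simp add: hcube_vertices_def)
    from y have "card {i. i < length x \<and> x ! i \<noteq> y ! i} = 1" by (simp add: hdist_def)
    then obtain k where k: "{i. i < length x \<and> x ! i \<noteq> y ! i} = {k}"
      by (metis One_nat_def card_1_singleton_iff)
    then have kall: "\<forall>i. (i < length x \<and> x ! i \<noteq> y ! i) = (i = k)"
      unfolding set_eq_iff mem_Collect_eq singleton_iff .
    then have "k < length x" by blast
    then have kn: "k < n" using len by simp
    have "y = flip x k"
    proof (rule nth_equalityI)
      show "length y = length (flip x k)" using ly len by (simp add: flip_def)
      fix i assume "i < length y"
      then have i: "i < length x" using ly len by simp
      have ik: "(i < length x \<and> x ! i \<noteq> y ! i) = (i = k)" using kall by blast
      show "y ! i = flip x k ! i"
      proof (cases "i = k")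
        case True
        then have "x ! i \<noteq> y ! i" using ik by simp
        then show ?thesis using True i by (simp add: flip_def)
      next
        case False
        then have "x ! i = y ! i" using ik i by simp
        then show ?thesis using False i by (simp add: flip_def)
      qed
    qed
    then show "y \<in> flip x ` {..<n}" using kn by auto
  qed
qed

lemma flip_inj: assumes "length x = n" shows "inj_on (flip x) {..<n}"
proof (rule inj_onI)
  fix k k' assume "k \<in> {..<n}" "k' \<in> {..<n}" "flip x k = flip x k'"
  then have "flip x k ! k = flip x k' ! k" by simp
  then show "k = k'" using assms \<open>k \<in> {..<n}\<close> by (cases "k = k'") (simp_all add: flip_def)
qed

lemma sum_A1:
  assumes "x \<in> hcube_vertices n"
  shows "(\<Sum>y\<in>hcube_vertices n. dist_matrix 1 x y * f y) = (\<Sum>k<n. f (flip x k))"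
proof -
  have "(\<Sum>y\<in>hcube_vertices n. dist_matrix 1 x y * f y) = (\<Sum>y\<in>{y \<in> hcube_vertices n. hdist x y = 1}. f y)"
  proof -
    have "(\<Sum>y\<in>hcube_vertices n. dist_matrix 1 x y * f y) = (\<Sum>y\<in>hcube_vertices n. if hdist x y = 1 then f y else 0)"
      by (rule sum.cong) (auto simp: dist_matrix_def)
    then show ?thesis by (simp add: sum.inter_filter[OF finite_V])
  qed
  also have "\<dots> = (\<Sum>k<n. f (flip x k))"
    unfolding neighbours[OF assms]
    using flip_inj[of x n] assms by (simp add: sum.reindex hcube_vertices_def)
  finally show ?thesis .
qed

lemma count_flip:
  assumes "x \<in> hcube_vertices n" "z \<in> hcube_vertices n"
  shows "(\<Sum>k<n. dist_matrix j (flip x k) z) =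
     (if hdist x z = j + 1 then real (j+1) else 0) + (if hdist x z + 1 = j then real (n - hdist x z) else 0)"
proof -
  let ?D = "hdist x z"
  let ?A = "{k. k < n \<and> x ! k \<noteq> z ! k}"
  let ?B = "{k. k < n \<and> x ! k = z ! k}"
  have len: "length x = n" "length z = n" using assms by (auto simp: hcube_vertices_def)
  have cA: "card ?A = ?D" using len by (simp add: hdist_def)
  have fin: "finite ?A" "finite ?B" by auto
  have un: "{..<n} = ?A \<union> ?B" by auto
  have cB: "card ?B = n - ?D"
  proof -
    have "card (?A \<union> ?B) = card ?A + card ?B" by (rule card_Un_disjoint) auto
    then have "card ?A + card ?B = n" unfolding un[symmetric] by simp
    then show ?thesis using cA by simp
  qed
  have "(\<Sum>k<n. dist_matrix j (flip x k) z) = (\<Sum>k\<in>?A. dist_matrix j (flip x k) z) + (\<Sum>k\<in>?B. dist_matrix j (flip x k) z)"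
    unfolding un by (rule sum.union_disjoint) auto
  also have "(\<Sum>k\<in>?A. dist_matrix j (flip x k) z) = (\<Sum>k\<in>?A. if ?D - 1 = j then 1 else 0)"
    by (rule sum.cong) (auto simp: dist_matrix_def hdist_flip len)
  also have "(\<Sum>k\<in>?B. dist_matrix j (flip x k) z) = (\<Sum>k\<in>?B. if ?D + 1 = j then 1 else 0)"
    by (rule sum.cong) (auto simp: dist_matrix_def hdist_flip len)
  finally have eq: "(\<Sum>k<n. dist_matrix j (flip x k) z) = (if ?D - 1 = j then real ?D else 0) + (if ?D + 1 = j then real (n - ?D) else 0)"
    using cA cB by simp
  have "(if ?D - 1 = j then real ?D else 0) = (if ?D = j + 1 then real (j+1) else 0)"
  proof (cases "?D = j + 1")
    case True then show ?thesis by simp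
  next
    case False
    show ?thesis
    proof (cases "?D - 1 = j")
      case True
      then have "?D = 0" using False by arith
      then show ?thesis by simp
    qed (use False in simp)
  qed
  then show ?thesis using eq by simp
qed


lemma S0:
  assumes "x \<in> hcube_vertices n"
  shows "(\<Sum>y\<in>hcube_vertices n. dist_matrix 0 x y * v y) = v x"
proof -
  have "(\<Sum>y\<in>hcube_vertices n. dist_matrix 0 x y * v y) = (\<Sum>y\<in>hcube_vertices n. if x = y then v y else 0)"
  proof (rule sum.cong)
    fix y assume "y \<in> hcube_vertices n"
    then have "length x = length y" using assms by (simp add: hcube_vertices_def)
    then show "dist_matrix 0 x y * v y = (if x = y then v y else 0)"
      using hdist_0[of x y] by (simp add: dist_matrix_def)
  qed simp
  also have "\<dots> = v x" using assms finite_V[of n] by simp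
  finally show ?thesis .
qed

lemma main:
  fixes m :: nat
  assumes v: "v \<in> hcube_kernel (2*m+1) (\<lambda>x y. dist_matrix 0 x y + dist_matrix 1 x y)"
  shows "j \<le> 2*m+1 \<Longrightarrow> x \<in> hcube_vertices (2*m+1) \<Longrightarrow>
         (\<Sum>y\<in>hcube_vertices (2*m+1). dist_matrix j x y * v y) = cc m j * v x"
proof (induction j arbitrary: x rule: less_induct)
  case (less j)
  define n where "n = 2*m+1"
  define S where "S = (\<lambda>j x. (\<Sum>y\<in>hcube_vertices n. dist_matrix j x y * v y))"
  have S0': "S 0 x = v x" if "x \<in> hcube_vertices n" for x
    unfolding S_def using S0[OF that] .
  have S1': "S 1 x = - v x" if "x \<in> hcube_vertices n" for x
  proof -
    have "(\<Sum>y\<in>hcube_vertices n. (dist_matrix 0 x y + dist_matrix 1 x y) * v y) = 0"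
      using v that unfolding hcube_kernel_def n_def by blast
    then have "S 0 x + S 1 x = 0" unfolding S_def by (simp add: distrib_right sum.distrib)
    then show ?thesis using S0'[OF that] by simp
  qed
  have x: "x \<in> hcube_vertices n" using less.prems n_def by simp
  consider "j = 0" | "j = 1" | j' where "j = j' + 2" by (metis One_nat_def add_2_eq_Suc' not0_implies_Suc)
  then show ?case
  proof cases
    case 1 then show ?thesis using S0'[OF x] by (simp add: S_def n_def cc_def)
  next
    case 2 then show ?thesis using S1'[OF x] by (simp add: S_def n_def cc_def)
  next
    case 3
    have IH1: "S (j'+1) y = cc m (j'+1) * v y" if "y \<in> hcube_vertices n" for y
      using less.IH[of "j'+1" y] less.prems 3 that by (simp add: S_def n_def)
    have IH0: "S j' y = cc m j' * v y" if "y \<in> hcube_vertices n" for y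
      using less.IH[of "j'" y] less.prems 3 that by (simp add: S_def n_def)
    have "(\<Sum>y\<in>hcube_vertices n. dist_matrix 1 x y * S (j'+1) y) = (\<Sum>k<n. S (j'+1) (flip x k))"
      by (rule sum_A1[OF x])
    also have "\<dots> = (\<Sum>k<n. \<Sum>z\<in>hcube_vertices n. dist_matrix (j'+1) (flip x k) z * v z)"
      by (simp add: S_def)
    also have "\<dots> = (\<Sum>z\<in>hcube_vertices n. \<Sum>k<n. dist_matrix (j'+1) (flip x k) z * v z)"
      by (rule sum.swap)
    also have "\<dots> = (\<Sum>z\<in>hcube_vertices n. (real (j'+2) * dist_matrix (j'+2) x z + real (n - j') * dist_matrix j' x z) * v z)"
    proof (rule sum.cong)
      fix z assume z: "z \<in> hcube_vertices n"
      have "(\<Sum>k<n. dist_matrix (j'+1) (flip x k) z * v z) = (\<Sum>k<n. dist_matrix (j'+1) (flip x k) z) * v z"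
        by (simp add: sum_distrib_right)
      also have "\<dots> = (real (j'+2) * dist_matrix (j'+2) x z + real (n - j') * dist_matrix j' x z) * v z"
        unfolding count_flip[OF x z] by (simp add: dist_matrix_def)
      finally show "(\<Sum>k<n. dist_matrix (j'+1) (flip x k) z * v z) = (real (j'+2) * dist_matrix (j'+2) x z + real (n - j') * dist_matrix j' x z) * v z" .
    qed simp
    also have "\<dots> = real (j'+2) * S (j'+2) x + real (n - j') * S j' x"
      by (simp add: S_def distrib_right sum.distrib sum_distrib_left mult.assoc)
    finally have e1: "(\<Sum>y\<in>hcube_vertices n. dist_matrix 1 x y * S (j'+1) y) = real (j'+2) * S (j'+2) x + real (n - j') * S j' x" .
    have "(\<Sum>y\<in>hcube_vertices n. dist_matrix 1 x y * S (j'+1) y) = (\<Sum>y\<in>hcube_vertices n. dist_matrix 1 x y * (cc m (j'+1) * v y))"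
      using IH1 by (intro sum.cong) auto
    also have "\<dots> = cc m (j'+1) * S 1 x" by (simp add: S_def sum_distrib_left mult.commute mult.left_commute)
    also have "\<dots> = - cc m (j'+1) * v x" using S1'[OF x] by simp
    finally have e2: "real (j'+2) * S (j'+2) x + real (n - j') * (cc m j' * v x) = - cc m (j'+1) * v x"
      using e1 IH0[OF x] by simp
    have jn: "j' \<le> n" using less.prems 3 n_def by simp
    then have rn: "real (n - j') = real (2*m+1) - real j'" using n_def by simp
    have A: "real (j'+2) * S (j'+2) x = - cc m (j'+1) * v x - (real (2*m+1) - real j') * (cc m j' * v x)"
      using e2 unfolding rn by linarith
    have "real (j'+2) * (cc m (j'+2) * v x) = (real (j'+2) * cc m (j'+2)) * v x" by simp
    also have "\<dots> = (- cc m (j'+1) - (real (2*m+1) - real j') * cc m j') * v x" by (simp only: cc_rec)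
    also have "\<dots> = - cc m (j'+1) * v x - (real (2*m+1) - real j') * (cc m j' * v x)" by (simp add: algebra_simps)
    finally have "real (j'+2) * S (j'+2) x = real (j'+2) * (cc m (j'+2) * v x)"
      using A by simp
    then have "S (j'+2) x = cc m (j'+2) * v x" by simp
    then show ?thesis using 3 by (simp add: S_def n_def)
  qed
qed


lemma combine:
  assumes v: "v \<in> hcube_kernel (2*m+1) (\<lambda>x y. dist_matrix 0 x y + dist_matrix 1 x y)"
    and ab: "a \<le> 2*m+1" "b \<le> 2*m+1" "cc m a + cc m b = 0"
  shows "v \<in> hcube_kernel (2*m+1) (\<lambda>x y. dist_matrix a x y + dist_matrix b x y)"
proof -
  have "(\<Sum>y\<in>hcube_vertices (2*m+1). (dist_matrix a x y + dist_matrix b x y) * v y) = 0"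
    if x: "x \<in> hcube_vertices (2*m+1)" for x
  proof -
    have "(\<Sum>y\<in>hcube_vertices (2*m+1). (dist_matrix a x y + dist_matrix b x y) * v y)
       = (\<Sum>y\<in>hcube_vertices (2*m+1). dist_matrix a x y * v y) + (\<Sum>y\<in>hcube_vertices (2*m+1). dist_matrix b x y * v y)"
      by (simp add: distrib_right sum.distrib)
    also have "\<dots> = (cc m a + cc m b) * v x"
      using main[OF v ab(1) x] main[OF v ab(2) x] by (simp add: distrib_right)
    finally show ?thesis using ab(3) by simp
  qed
  then show ?thesis using v unfolding hcube_kernel_def by blast
qed

theorem lemma3p8:
  fixes n :: nat
  shows "(odd n \<longrightarrow>
           (\<forall>i. i \<le> (n - 1) div 2 \<longrightarrow>
              hcube_kernel n (\<lambda>x y. dist_matrix 0 x y + dist_matrix 1 x y)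
                \<subseteq> hcube_kernel n (\<lambda>x y. dist_matrix (2*i) x y + dist_matrix (2*i+1) x y)))
       \<and> (n mod 4 = 1 \<longrightarrow>
           (\<forall>i. i \<le> (n - 1) div 2 \<longrightarrow>
              hcube_kernel n (\<lambda>x y. dist_matrix 0 x y + dist_matrix 1 x y)
                \<subseteq> hcube_kernel n (\<lambda>x y. dist_matrix i x y + dist_matrix (n - i) x y)))"
proof (intro conjI impI allI subsetI)
  fix i v
  assume n: "odd n" and i: "i \<le> (n - 1) div 2"
    and v: "v \<in> hcube_kernel n (\<lambda>x y. dist_matrix 0 x y + dist_matrix 1 x y)"
  obtain m where m: "n = 2*m+1" using n oddE by blast
  show "v \<in> hcube_kernel n (\<lambda>x y. dist_matrix (2*i) x y + dist_matrix (2*i+1) x y)"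
    using combine[of v m "2*i" "2*i+1"] v i m cc_pair by simp
next
  fix i v
  assume n: "n mod 4 = 1" and i: "i \<le> (n - 1) div 2"
    and v: "v \<in> hcube_kernel n (\<lambda>x y. dist_matrix 0 x y + dist_matrix 1 x y)"
  have "odd n" using n by (metis dvd_mod_iff even_numeral odd_one)
  then obtain m where m: "n = 2*m+1" using oddE by blast
  have em: "even m" using n m by presburger
  have im: "i \<le> m" using i m by simp
  show "v \<in> hcube_kernel n (\<lambda>x y. dist_matrix i x y + dist_matrix (n - i) x y)"
    using combine[of v m i "n - i"] v im m cc_sym[OF em im] by simp
qed

end
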